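(* Let $(M,\mathcal A)$ be a measurable space, $m$ a probability measure on it, $\ell_1,\ell_2,\dots:M\to\mathbb R$ measurable functions, $L_0=0$, $L_t=\sum_{s=1}^t\ell_s$, and $(\beta_t)_{t\ge1}$ with $0<\beta_{t+1}\le\beta_t$ for all $t$. Assume all integrals $\int e^{-\beta_sL_t}\mathrm dm$ appearing below are finite, and define $\mathrm dm_t=e^{-\beta_tL_{t-1}}\mathrm dm/\int e^{-\beta_tL_{t-1}}\mathrm dm$. Then for all $n\ge1$, \[-\sum_{t=1}^n\frac{1}{\beta_t}\ln\Big(\int_Me^{-\beta_t\ell_t}\,\mathrm dm_t\Big)\le-\frac{1}{\beta_{n+1}}\ln\Big(\int_Me^{-\beta_{n+1}L_n}\,\mathrm dm\Big).\] *)

theory Defs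
  imports "HOL-Probability.Probability"
begin

definition cumloss :: "(nat \<Rightarrow> 'a \<Rightarrow> real) \<Rightarrow> nat \<Rightarrow> 'a \<Rightarrow> real" where
  "cumloss l t x = (\<Sum>s=1..t. l s x)"

definition gibbs :: "'a measure \<Rightarrow> (nat \<Rightarrow> real) \<Rightarrow> (nat \<Rightarrow> 'a \<Rightarrow> real) \<Rightarrow> nat \<Rightarrow> 'a measure" where
  "gibbs m \<beta> l t = density m (\<lambda>x. ennreal (exp (- \<beta> t * cumloss l (t - 1) x)
      / (\<integral>y. exp (- \<beta> t * cumloss l (t - 1) y) \<partial>m)))"

end

theory Submission
  imports Defs
begin

lemma pos_int:
  fixes f :: "'a \<Rightarrow> real"
  assumes "prob_space m" "integrable m (\<lambda>x. exp (f x :: real))"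
  shows "0 < (\<integral>x. exp (f x) \<partial>m)"
proof -
  have ge: "0 \<le> (\<integral>x. exp (f x) \<partial>m)" by (rule integral_nonneg_AE) auto
  have "(\<integral>x. exp (f x) \<partial>m) \<noteq> 0"
  proof
    assume "(\<integral>x. exp (f x) \<partial>m) = 0"
    then have "AE x in m. exp (f x) = 0"
      using integral_nonneg_eq_0_iff_AE[OF assms(2)] by auto
    then have "AE x in m. False" by simp
    then show False using prob_space.AE_False[OF assms(1)] by simp
  qed
  then show ?thesis using ge by linarith
qed

lemma key:
  fixes L :: "'a \<Rightarrow> real" and b b' :: real
  assumes P: "prob_space m" and b: "0 < b'" "b' \<le> b"
    and i1: "integrable m (\<lambda>x. exp (- b' * L x))"
    and i2: "integrable m (\<lambda>x. exp (- b * L x))"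
  shows "(1/b') * ln (\<integral>x. exp (- b' * L x) \<partial>m) \<le> (1/b) * ln (\<integral>x. exp (- b * L x) \<partial>m)"
proof -
  interpret prob_space m by fact
  let ?X = "\<lambda>x. exp (- b' * L x)"
  let ?q = "\<lambda>y. y powr (b / b')"
  have qX: "?q (?X x) = exp (- b * L x)" for x
  proof -
    have "b / b' * (- (b' * L x)) = - (b * L x)" using b by (simp add: field_simps)
    then show ?thesis by (simp add: powr_def)
  qed
  have J: "?q (expectation ?X) \<le> expectation (\<lambda>x. ?q (?X x))"
  proof (rule jensens_inequality[where I="{0<..}"])
    show "integrable m (\<lambda>x. ?q (?X x))" unfolding qX by (rule i2)
  qed (use i1 b in \<open>auto intro!: powr_convex\<close>)
  have pX: "0 < expectation ?X" using pos_int[OF P i1] by simp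
  have p2: "0 < (\<integral>x. exp (- b * L x) \<partial>m)" using pos_int[OF P i2] by simp
  have J2: "?q (expectation ?X) \<le> (\<integral>x. exp (- b * L x) \<partial>m)"
    using J unfolding qX .
  have "ln (?q (expectation ?X)) \<le> ln (\<integral>x. exp (- b * L x) \<partial>m)"
    using J2 pX p2 by (subst ln_le_cancel_iff) auto
  then have "(b / b') * ln (expectation ?X) \<le> ln (\<integral>x. exp (- b * L x) \<partial>m)"
    using pX by (simp add: ln_powr)
  then have "(1/b) * ((b / b') * ln (expectation ?X)) \<le> (1/b) * ln (\<integral>x. exp (- b * L x) \<partial>m)"
    using b by (intro mult_left_mono) auto
  then show ?thesis using b by simp
qed

theorem mainTheorem10:
  fixes m :: "'a measure" and l :: "nat \<Rightarrow> 'a \<Rightarrow> real" and \<beta> :: "nat \<Rightarrow> real" and n :: nat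
  assumes "prob_space m"
    and "\<And>t. t \<ge> 1 \<Longrightarrow> l t \<in> borel_measurable m"
    and "\<And>t. t \<ge> 1 \<Longrightarrow> 0 < \<beta> (Suc t) \<and> \<beta> (Suc t) \<le> \<beta> t"
    and "\<And>t. 1 \<le> t \<Longrightarrow> t \<le> n + 1 \<Longrightarrow> integrable m (\<lambda>x. exp (- \<beta> t * cumloss l (t - 1) x))"
    and "\<And>t. 1 \<le> t \<Longrightarrow> t \<le> n \<Longrightarrow> integrable m (\<lambda>x. exp (- \<beta> t * cumloss l t x))"
    and "n \<ge> 1"
  shows "- (\<Sum>t=1..n. (1 / \<beta> t) * ln (\<integral>x. exp (- \<beta> t * l t x) \<partial>(gibbs m \<beta> l t)))
         \<le> - (1 / \<beta> (n + 1)) * ln (\<integral>x. exp (- \<beta> (n + 1) * cumloss l n x) \<partial>m)"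
proof -
  note P = assms(1)
  interpret prob_space m by fact
  have bpos: "0 < \<beta> t" if t1: "t \<ge> 1" for t
  proof (cases "t = 1")
    case True then show ?thesis using assms(3)[of 1] by auto
  next
    case False
    then obtain k where k: "t = Suc k" "k \<ge> 1" using t1 by (cases t) auto
    show ?thesis using assms(3)[OF k(2)] k(1) by simp
  qed
  have meas[measurable]: "cumloss l t \<in> borel_measurable m" for t
    unfolding cumloss_def[abs_def] using assms(2) by (intro borel_measurable_sum) auto
  define Z where "Z t b = (\<integral>x. exp (- b * cumloss l t x) \<partial>m)" for t b
  define g where "g t = (1 / \<beta> (Suc t)) * ln (Z t (\<beta> (Suc t)))" for t
  have cs: "cumloss l t x = cumloss l (t - 1) x + l t x" if "t \<ge> 1" for t x
  proof -
    obtain k where "t = Suc k" using \<open>t \<ge> 1\<close> not0_implies_Suc by fastforce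
    then show ?thesis unfolding cumloss_def by simp
  qed
  have hterm: "(1 / \<beta> t) * ln (\<integral>x. exp (- \<beta> t * l t x) \<partial>(gibbs m \<beta> l t))
      = (1 / \<beta> t) * ln (Z t (\<beta> t)) - (1 / \<beta> t) * ln (Z (t - 1) (\<beta> t))"
    if t: "t \<in> {1..n}" for t
  proof -
    have i0: "integrable m (\<lambda>x. exp (- \<beta> t * cumloss l (t - 1) x))" using assms(4) t by auto
    have i1: "integrable m (\<lambda>x. exp (- \<beta> t * cumloss l t x))" using assms(5) t by auto
    have p0: "0 < Z (t - 1) (\<beta> t)" unfolding Z_def using pos_int[OF P i0] by simp
    have p1: "0 < Z t (\<beta> t)" unfolding Z_def using pos_int[OF P i1] by simp
    have ml[measurable]: "l t \<in> borel_measurable m" using assms(2) t by auto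
    have "(\<integral>x. exp (- \<beta> t * l t x) \<partial>(gibbs m \<beta> l t))
        = (\<integral>x. (exp (- \<beta> t * cumloss l (t - 1) x) / Z (t - 1) (\<beta> t)) * exp (- \<beta> t * l t x) \<partial>m)"
      unfolding gibbs_def Z_def
    proof (subst integral_density)
      show "(\<lambda>x. exp (- \<beta> t * l t x)) \<in> borel_measurable m" using ml by measurable
      show "(\<lambda>x. exp (- \<beta> t * cumloss l (t - 1) x) / (\<integral>y. exp (- \<beta> t * cumloss l (t - 1) y) \<partial>m)) \<in> borel_measurable m"
        using meas by measurable
    qed (use p0 in \<open>auto simp: Z_def[symmetric] less_imp_le\<close>)
    also have "\<dots> = (\<integral>x. exp (- \<beta> t * cumloss l t x) / Z (t - 1) (\<beta> t) \<partial>m)"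
      using t by (intro Bochner_Integration.integral_cong) (auto simp: cs exp_add[symmetric] algebra_simps)
    also have "\<dots> = Z t (\<beta> t) / Z (t - 1) (\<beta> t)"
      unfolding Z_def by simp
    finally show ?thesis using p0 p1 by (simp add: ln_div right_diff_distrib)
  qed
  have ineq: "- (1 / \<beta> t) * ln (Z t (\<beta> t)) \<le> - g t" if t: "t \<in> {1..n}" for t
  proof -
    have "g t \<le> (1 / \<beta> t) * ln (Z t (\<beta> t))"
      unfolding g_def Z_def
      apply (rule key[OF P])
      using assms(3)[of t] assms(4)[of "Suc t"] assms(5)[of t] t by auto
    then show ?thesis by simp
  qed
  have gm: "g (t - 1) = (1 / \<beta> t) * ln (Z (t - 1) (\<beta> t))" if "t \<ge> 1" for t
    using that unfolding g_def by simp
  have tel: "(\<Sum>t=1..k. g (t - 1) - g t) = g 0 - g k" for k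
    by (induction k) auto
  have g0: "g 0 = 0" unfolding g_def Z_def cumloss_def by (simp add: prob_space)
  have "- (\<Sum>t=1..n. (1 / \<beta> t) * ln (\<integral>x. exp (- \<beta> t * l t x) \<partial>(gibbs m \<beta> l t)))
      = (\<Sum>t=1..n. - (1 / \<beta> t) * ln (Z t (\<beta> t)) + g (t - 1))"
    unfolding sum_negf[symmetric]
  proof (rule sum.cong)
    fix t assume t: "t \<in> {1..n}"
    show "- ((1 / \<beta> t) * ln (\<integral>x. exp (- \<beta> t * l t x) \<partial>(gibbs m \<beta> l t)))
      = - (1 / \<beta> t) * ln (Z t (\<beta> t)) + g (t - 1)"
      unfolding hterm[OF t] using t gm[of t] by simp
  qed simp
  also have "\<dots> \<le> (\<Sum>t=1..n. - g t + g (t - 1))"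
    by (intro sum_mono) (use ineq in auto)
  also have "\<dots> = g 0 - g n" using tel[of n] by (simp add: algebra_simps)
  finally have "- (\<Sum>t=1..n. (1 / \<beta> t) * ln (\<integral>x. exp (- \<beta> t * l t x) \<partial>(gibbs m \<beta> l t))) \<le> - g n"
    using g0 by simp
  then show ?thesis unfolding g_def Z_def by simp
qed

end
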